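(* Let $G_\sigma$ be an ordered graph on $\{1,\dots,p\}$. The following are equivalent: (a) $G_\sigma$ satisfies Property-B; (b) for every $1\le k\le j\le i\le p$, $L_{ik}L_{jk}D_k$ can be expressed as a polynomial in the entries of $L_I$ and $\widetilde D$ (with negative powers allowed for entries of $\widetilde D$), and in every term of the expansion of $L_{ik}L_{jk}D_k$ the power of every entry of $\widetilde D$ is $0$, $1$ or $-1$.
   Context: $G_\sigma$ has edge set $E_\sigma$. For $\Omega$ symmetric positive definite with $\Omega_{ij}=0$ for $i\ne j$, $(i,j)\notin E_\sigma$, write $\Omega=LDL^T$ (modified Cholesky: $L$ unit lower triangular, $D=\mathrm{diag}(D_1,\dots,D_p)$), $\widetilde D_1=D_1$, $\widetilde D_k=D_k/D_{k-1}$, so $D_k=\prod_{l\le k}\widetilde D_l$. $L_I=\{L_{ij}:i>j,(i,j)\in E_\sigma\}$ are independent parameters; for $i>j$, $(i,j)\notin E_\sigma$, the relation $L_{ij}=-\sum_{k<j}L_{ik}L_{jk}\prod_{l=k+1}^j\widetilde D_l^{-1}$ applied recursively expresses $L_{ij}$ as a polynomial (its expansion, like terms collected) in $L_I$ and $\widetilde D_1^{-1},\dots,\widetilde D_p^{-1}$; $L_{kk}=1$. $G_\sigma$ has Property-B if for every $i>j$ with $(i,j)\notin E_\sigma$, every $\widetilde D_k$ appears in every term of the expansion of $L_{ij}$ with exponent $0$ or $-1$. *)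

theory Defs
  imports Main "HOL-Library.Poly_Mapping"
begin

text \<open>Variables of the Laurent polynomial ring: the free entries L_ij (i>j, (i,j) in E)
  and the entries Dtilde_l of Dtilde.\<close>
datatype var = Lv nat nat | Dv nat

text \<open>Laurent polynomials with integer coefficients: a monomial assigns an integer
  exponent to each variable; a polynomial is a finitely supported map from monomials to
  coefficients (like terms collected).\<close>
type_synonym lpoly = "(var \<Rightarrow>\<^sub>0 int) \<Rightarrow>\<^sub>0 int"

definition mono_var :: "var \<Rightarrow> int \<Rightarrow> lpoly" where
  "mono_var v e = Poly_Mapping.single (Poly_Mapping.single v e) 1"

text \<open>Ordered graph on {1..p}: simple undirected graph, vertex order the natural one.\<close>
definition ordered_graph :: "nat \<Rightarrow> (nat \<times> nat) set \<Rightarrow> bool" where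
  "ordered_graph p E \<longleftrightarrow> E \<subseteq> {1..p} \<times> {1..p} \<and> sym E \<and> irrefl E"

function Lpoly :: "(nat \<times> nat) set \<Rightarrow> nat \<Rightarrow> nat \<Rightarrow> lpoly" where
  "Lpoly E i j =
     (if i = j then 1
      else if i < j then 0
      else if (i, j) \<in> E then mono_var (Lv i j) 1
      else - (\<Sum>k\<in>{1..<j}. Lpoly E i k * Lpoly E j k *
                             (\<Prod>l\<in>{k+1..j}. mono_var (Dv l) (-1))))"
  by auto
termination
  by (relation "measure (\<lambda>(E, i, j). j)") auto

definition Dpoly :: "nat \<Rightarrow> lpoly" where
  "Dpoly k = (\<Prod>l\<in>{1..k}. mono_var (Dv l) 1)"

definition property_B :: "nat \<Rightarrow> (nat \<times> nat) set \<Rightarrow> bool" where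
  "property_B p E \<longleftrightarrow>
     (\<forall>i j. 1 \<le> j \<and> j < i \<and> i \<le> p \<and> (i, j) \<notin> E \<longrightarrow>
        (\<forall>m \<in> Poly_Mapping.keys (Lpoly E i j). \<forall>l. Poly_Mapping.lookup m (Dv l) \<in> {0, -1}))"

end

theory Submission
  imports Defs "HOL-Library.Product_Lexorder"
begin

declare Lpoly.simps[simp del]

fun var_key :: "var \<Rightarrow> nat \<times> nat \<times> nat" where
  "var_key (Lv a b) = (0, a, b)" | "var_key (Dv a) = (1, a, 0)"

lemma var_key_inj: "var_key x = var_key y \<Longrightarrow> x = y"
  by (cases x; cases y) auto

instantiation var :: linorder
begin
definition less_eq_var :: "var \<Rightarrow> var \<Rightarrow> bool" where "less_eq_var x y \<longleftrightarrow> var_key x \<le> var_key y"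
definition less_var :: "var \<Rightarrow> var \<Rightarrow> bool" where "less_var x y \<longleftrightarrow> var_key x < var_key y"
instance
  by standard (auto simp: less_eq_var_def less_var_def intro: var_key_inj)
end


lemma keys_mult_sub:
  assumes "Poly_Mapping.keys (f::lpoly) \<subseteq> S" "Poly_Mapping.keys g \<subseteq> S" "\<And>a b. a \<in> S \<Longrightarrow> b \<in> S \<Longrightarrow> a + b \<in> S"
  shows "Poly_Mapping.keys (f * g) \<subseteq> S"
  using keys_mult[of f g] assms by blast

lemma keys_prod_sub:
  assumes "\<And>i. i \<in> A \<Longrightarrow> Poly_Mapping.keys ((f i)::lpoly) \<subseteq> S" "0 \<in> S" "\<And>a b. a \<in> S \<Longrightarrow> b \<in> S \<Longrightarrow> a + b \<in> S"
  shows "Poly_Mapping.keys (\<Prod>i\<in>A. f i) \<subseteq> S"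
  using assms(1)
proof (induction A rule: infinite_finite_induct)
  case (infinite A) then show ?case using assms by simp
next
  case empty then show ?case using assms by simp
next
  case (insert x F)
  then show ?case by (simp add: keys_mult_sub assms)
qed

lemma keys_sum_sub:
  assumes "\<And>i. i \<in> A \<Longrightarrow> Poly_Mapping.keys ((f i)::lpoly) \<subseteq> S"
  shows "Poly_Mapping.keys (\<Sum>i\<in>A. f i) \<subseteq> S"
  using keys_sum[of f A] assms by blast

lemma keys_mono_var: "Poly_Mapping.keys (mono_var v e) = {Poly_Mapping.single v e}"
  by (simp add: mono_var_def)

definition Sset :: "nat \<Rightarrow> (var \<Rightarrow>\<^sub>0 int) set" where
  "Sset j = {m. \<forall>l. Poly_Mapping.lookup m (Dv l) \<le> 0 \<and> (l \<notin> {1..j} \<longrightarrow> Poly_Mapping.lookup m (Dv l) = 0)}"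

lemma Sset_add: "a \<in> Sset j \<Longrightarrow> b \<in> Sset j \<Longrightarrow> a + b \<in> Sset j"
  by (auto simp: Sset_def Poly_Mapping.lookup_add) (metis add_nonpos_nonpos)+

lemma Sset_zero: "0 \<in> Sset j" by (simp add: Sset_def)

lemma Sset_mono: "k \<le> j \<Longrightarrow> m \<in> Sset k \<Longrightarrow> m \<in> Sset j"
  by (auto simp: Sset_def)

lemma Lpoly_Sset: "Poly_Mapping.keys (Lpoly E i j) \<subseteq> Sset j"
proof (induction E i j rule: Lpoly.induct)
  case (1 E i j)
  show ?case
  proof (cases "i = j \<or> i < j \<or> (i, j) \<in> E")
    case True
    then show ?thesis
      by (auto simp: Lpoly.simps[of E i j] keys_mono_var Sset_def lookup_single Sset_zero)
  next
    case False
    have "Poly_Mapping.keys (\<Sum>k\<in>{1..<j}. Lpoly E i k * Lpoly E j k *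
                             (\<Prod>l\<in>{k+1..j}. mono_var (Dv l) (-1))) \<subseteq> Sset j"
    proof (rule keys_sum_sub)
      fix k assume k: "k \<in> {1..<j}"
      have a: "Poly_Mapping.keys (Lpoly E i k) \<subseteq> Sset j" using 1(1)[OF _ _ _ k] False k Sset_mono
        by (meson atLeastLessThan_iff less_imp_le_nat subset_iff)
      have b: "Poly_Mapping.keys (Lpoly E j k) \<subseteq> Sset j" using 1(2)[OF _ _ _ k] False k Sset_mono
        by (meson atLeastLessThan_iff less_imp_le_nat subset_iff)
      have c: "Poly_Mapping.keys (\<Prod>l\<in>{k+1..j}. mono_var (Dv l) (-1)) \<subseteq> Sset j"
        apply (rule keys_prod_sub)
          apply (use k in \<open>auto simp: keys_mono_var Sset_def lookup_single when_def\<close>)[1]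
         apply (rule Sset_zero)
        by (rule Sset_add)
      show "Poly_Mapping.keys (Lpoly E i k * Lpoly E j k * (\<Prod>l\<in>{k+1..j}. mono_var (Dv l) (-1))) \<subseteq> Sset j"
        by (intro keys_mult_sub a b c Sset_add)
    qed
    then show ?thesis using False by (subst Lpoly.simps) simp
  qed
qed


lemma prod_single_one: "(\<Prod>l\<in>A. Poly_Mapping.single (g l) (1::int)) = Poly_Mapping.single (\<Sum>l\<in>A. g l) 1"
proof (induction A rule: infinite_finite_induct)
  case (insert x F) then show ?case by (simp add: mult_single)
qed simp_all

definition dk :: "nat \<Rightarrow> var \<Rightarrow>\<^sub>0 int" where
  "dk k = (\<Sum>l\<in>{1..k}. Poly_Mapping.single (Dv l) 1)"

lemma Dpoly_single: "Dpoly k = Poly_Mapping.single (dk k) 1"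
  unfolding Dpoly_def dk_def mono_var_def by (rule prod_single_one)

lemma lookup_dk: "Poly_Mapping.lookup (dk k) (Dv l) = (if l \<in> {1..k} then 1 else 0)"
  unfolding dk_def by (simp add: lookup_sum lookup_single when_def)

lemma keys_shift:
  assumes "x \<in> Poly_Mapping.keys (F::lpoly)"
  shows "x + d \<in> Poly_Mapping.keys (F * Poly_Mapping.single d 1)"
proof -
  have e: "Poly_Mapping.single d (1::int) * Poly_Mapping.single (-d) 1 = 1"
    by (simp only: mult_single add.right_inverse mult.right_neutral single_one)
  have eq: "F = (F * Poly_Mapping.single d 1) * Poly_Mapping.single (-d) 1"
    by (simp only: mult.assoc e mult.right_neutral)
  have "x \<in> Poly_Mapping.keys ((F * Poly_Mapping.single d 1) * Poly_Mapping.single (-d) 1)"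
    by (subst eq[symmetric]) (rule assms)
  then obtain a where "a \<in> Poly_Mapping.keys (F * Poly_Mapping.single d 1)" "x = a + (-d)"
    using keys_mult by fastforce
  then show ?thesis by simp
qed

lemma keys_mult_lookup:
  assumes "y \<in> Poly_Mapping.keys ((f::lpoly) * g)"
  obtains a b where "a \<in> Poly_Mapping.keys f" "b \<in> Poly_Mapping.keys g"
    "Poly_Mapping.lookup y v = Poly_Mapping.lookup a v + Poly_Mapping.lookup b v"
proof -
  obtain a b where "a \<in> Poly_Mapping.keys f" "b \<in> Poly_Mapping.keys g" "y = a + b"
    using keys_mult[of f g] assms by blast
  then show ?thesis using that by (simp add: Poly_Mapping.lookup_add)
qed

lemma keys_mult_gt:
  assumes "Poly_Mapping.keys (f::lpoly) \<subseteq> {x. Poly_Mapping.lookup x v \<ge> e}"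
    "Poly_Mapping.keys g \<subseteq> {x. Poly_Mapping.lookup x v \<ge> e}"
    "Poly_Mapping.keys f \<subseteq> {x. Poly_Mapping.lookup x v > e} \<or> Poly_Mapping.keys g \<subseteq> {x. Poly_Mapping.lookup x v > e}"
  shows "Poly_Mapping.keys (f * g) \<subseteq> {x. Poly_Mapping.lookup x v > 2*e}"
proof
  fix y assume "y \<in> Poly_Mapping.keys (f * g)"
  then obtain a b where ab: "a \<in> Poly_Mapping.keys f" "b \<in> Poly_Mapping.keys g"
    "Poly_Mapping.lookup y v = Poly_Mapping.lookup a v + Poly_Mapping.lookup b v"
    by (rule keys_mult_lookup)
  have "Poly_Mapping.lookup a v \<ge> e" "Poly_Mapping.lookup b v \<ge> e" using ab assms(1,2) by blast+
  moreover have "Poly_Mapping.lookup a v > e \<or> Poly_Mapping.lookup b v > e" using ab assms(3) by blast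
  ultimately show "y \<in> {x. Poly_Mapping.lookup x v > 2*e}" using ab(3) by auto
qed

lemma lowest:
  fixes f :: lpoly
  assumes m: "m \<in> Poly_Mapping.keys f"
  shows "\<exists>x \<in> Poly_Mapping.keys (f*f). Poly_Mapping.lookup x v \<le> 2 * Poly_Mapping.lookup m v"
proof -
  let ?w = "\<lambda>x. Poly_Mapping.lookup x v"
  define e0 where "e0 = Min (?w ` Poly_Mapping.keys f)"
  have fin: "finite (Poly_Mapping.keys f)" by simp
  have e0le: "\<And>x. x \<in> Poly_Mapping.keys f \<Longrightarrow> e0 \<le> ?w x"
    unfolding e0_def using fin by simp
  have "e0 \<in> ?w ` Poly_Mapping.keys f" unfolding e0_def using fin m by (intro Min_in) auto
  then obtain m0 where m0: "m0 \<in> Poly_Mapping.keys f" "?w m0 = e0" by auto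
  define A where "A = {x \<in> Poly_Mapping.keys f. ?w x = e0}"
  define g where "g = (\<Sum>x\<in>A. Poly_Mapping.single x (Poly_Mapping.lookup f x))"
  define h where "h = f - g"
  have finA: "finite A" unfolding A_def by simp
  have lg: "Poly_Mapping.lookup g y = (if y \<in> A then Poly_Mapping.lookup f y else 0)" for y
    unfolding g_def using finA by (simp add: lookup_sum lookup_single when_def sum.delta)
  have kg: "Poly_Mapping.keys g \<subseteq> {x. ?w x = e0}"
    using lg by (auto simp: in_keys_iff A_def split: if_splits)
  have g0: "g \<noteq> 0"
  proof
    assume "g = 0"
    then have "Poly_Mapping.lookup g m0 = 0" by simp
    moreover have "m0 \<in> A" using m0 by (simp add: A_def)
    ultimately show False using lg m0(1) by (simp add: in_keys_iff)
  qed
  have kh: "Poly_Mapping.keys h \<subseteq> {x. ?w x > e0}"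
  proof
    fix y assume y: "y \<in> Poly_Mapping.keys h"
    then have ly: "Poly_Mapping.lookup f y - Poly_Mapping.lookup g y \<noteq> 0"
      by (simp add: h_def in_keys_iff lookup_minus)
    then have yA: "y \<notin> A" using lg by auto
    then have "y \<in> Poly_Mapping.keys f" using ly lg by (simp add: in_keys_iff)
    then show "y \<in> {x. ?w x > e0}" using yA e0le[of y] by (auto simp: A_def)
  qed
  have fgh: "f * f = g * g + (g * h + h * g + h * h)"
    by (simp add: h_def algebra_simps)
  have kgg: "Poly_Mapping.keys (g*g) \<subseteq> {x. ?w x = 2*e0}"
  proof
    fix y assume "y \<in> Poly_Mapping.keys (g*g)"
    then obtain a b where "a \<in> Poly_Mapping.keys g" "b \<in> Poly_Mapping.keys g" "y = a + b"
      using keys_mult[of g g] by blast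
    moreover have "?w a = e0" "?w b = e0" using kg \<open>a \<in> _\<close> \<open>b \<in> _\<close> by blast+
    ultimately show "y \<in> {x. ?w x = 2*e0}" by (simp add: Poly_Mapping.lookup_add)
  qed
  have krest: "Poly_Mapping.keys (g * h + h * g + h * h) \<subseteq> {x. ?w x > 2*e0}"
  proof -
    have kg': "Poly_Mapping.keys g \<subseteq> {x. ?w x \<ge> e0}" using kg by auto
    have kh': "Poly_Mapping.keys h \<subseteq> {x. ?w x \<ge> e0}" using kh by auto
    have 1: "Poly_Mapping.keys (g*h) \<subseteq> {x. ?w x > 2*e0}"
      by (rule keys_mult_gt) (use kg' kh' kh in auto)
    have 2: "Poly_Mapping.keys (h*g) \<subseteq> {x. ?w x > 2*e0}"
      by (rule keys_mult_gt) (use kg' kh' kh in auto)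
    have 3: "Poly_Mapping.keys (h*h) \<subseteq> {x. ?w x > 2*e0}"
      by (rule keys_mult_gt) (use kg' kh' kh in auto)
    show ?thesis using 1 2 3 keys_add by (meson Un_least subset_trans)
  qed
  have "g * g \<noteq> 0" using g0 by simp
  then obtain x where x: "x \<in> Poly_Mapping.keys (g*g)"
    by (metis all_not_in_conv keys_eq_empty)
  have "x \<notin> Poly_Mapping.keys (g * h + h * g + h * h)" using x kgg krest by force
  then have "Poly_Mapping.lookup (f*f) x = Poly_Mapping.lookup (g*g) x"
    by (simp add: fgh Poly_Mapping.lookup_add in_keys_iff)
  then have "x \<in> Poly_Mapping.keys (f*f)" using x by (simp add: in_keys_iff)
  moreover have "?w x \<le> 2 * ?w m" using x kgg e0le[OF m] by auto
  ultimately show ?thesis by blast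
qed


definition Tset :: "nat \<Rightarrow> (var \<Rightarrow>\<^sub>0 int) set" where
  "Tset k = {m. \<forall>l. Poly_Mapping.lookup m (Dv l) \<in> {0, -1} \<and> (l \<notin> {1..k} \<longrightarrow> Poly_Mapping.lookup m (Dv l) = 0)}"

lemma Lpoly_Tset:
  assumes B: "property_B p E" and "1 \<le> k" "k \<le> i" "i \<le> p"
  shows "Poly_Mapping.keys (Lpoly E i k) \<subseteq> Tset k"
proof (cases "i = k")
  case True then show ?thesis by (simp add: Tset_def Lpoly.simps[of E k k])
next
  case False
  show ?thesis
  proof (cases "(i, k) \<in> E")
    case True
    then show ?thesis using False assms
      by (auto simp: Lpoly.simps[of E i k] keys_mono_var Tset_def lookup_single when_def)
  next
    case nE: False
    show ?thesis
    proof
      fix m assume m: "m \<in> Poly_Mapping.keys (Lpoly E i k)"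
      have cc: "1 \<le> k \<and> k < i \<and> i \<le> p \<and> (i, k) \<notin> E" using False nE assms by auto
      have "\<forall>l. Poly_Mapping.lookup m (Dv l) \<in> {0, -1}"
        using B m cc unfolding property_B_def by blast
      moreover have "m \<in> Sset k" using Lpoly_Sset m by blast
      ultimately show "m \<in> Tset k" by (auto simp: Tset_def Sset_def)
    qed
  qed
qed

theorem lemma5:
  fixes p :: nat and E :: "(nat \<times> nat) set"
  assumes "ordered_graph p E"
  shows "property_B p E \<longleftrightarrow>
    (\<forall>i j k. 1 \<le> k \<and> k \<le> j \<and> j \<le> i \<and> i \<le> p \<longrightarrow>
       (\<forall>m \<in> Poly_Mapping.keys (Lpoly E i k * Lpoly E j k * Dpoly k).
          \<forall>l. Poly_Mapping.lookup m (Dv l) \<in> {-1, 0, 1}))"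
proof
  assume B: "property_B p E"
  show "\<forall>i j k. 1 \<le> k \<and> k \<le> j \<and> j \<le> i \<and> i \<le> p \<longrightarrow>
       (\<forall>m \<in> Poly_Mapping.keys (Lpoly E i k * Lpoly E j k * Dpoly k).
          \<forall>l. Poly_Mapping.lookup m (Dv l) \<in> {-1, 0, 1})"
  proof (intro allI impI ballI)
    fix i j k m l
    assume c: "1 \<le> k \<and> k \<le> j \<and> j \<le> i \<and> i \<le> p"
      and m: "m \<in> Poly_Mapping.keys (Lpoly E i k * Lpoly E j k * Dpoly k)"
    have ti: "Poly_Mapping.keys (Lpoly E i k) \<subseteq> Tset k" using Lpoly_Tset[OF B] c by auto
    have tj: "Poly_Mapping.keys (Lpoly E j k) \<subseteq> Tset k" using Lpoly_Tset[OF B] c by auto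
    obtain ab dd where ab: "ab \<in> Poly_Mapping.keys (Lpoly E i k * Lpoly E j k)"
      "dd \<in> Poly_Mapping.keys (Dpoly k)"
      "Poly_Mapping.lookup m (Dv l) = Poly_Mapping.lookup ab (Dv l) + Poly_Mapping.lookup dd (Dv l)"
      using keys_mult_lookup[OF m] by metis
    obtain a b where abk: "a \<in> Poly_Mapping.keys (Lpoly E i k)" "b \<in> Poly_Mapping.keys (Lpoly E j k)"
      "Poly_Mapping.lookup ab (Dv l) = Poly_Mapping.lookup a (Dv l) + Poly_Mapping.lookup b (Dv l)"
      using keys_mult_lookup[OF ab(1)] by metis
    have dd: "dd = dk k" using ab(2) by (simp add: Dpoly_single)
    have "a \<in> Tset k" "b \<in> Tset k" using abk ti tj by blast+
    then have ta: "Poly_Mapping.lookup a (Dv l) \<in> {0, -1}" "l \<notin> {1..k} \<longrightarrow> Poly_Mapping.lookup a (Dv l) = 0"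
      and tb: "Poly_Mapping.lookup b (Dv l) \<in> {0, -1}" "l \<notin> {1..k} \<longrightarrow> Poly_Mapping.lookup b (Dv l) = 0"
      unfolding Tset_def by blast+
    have eqm: "Poly_Mapping.lookup m (Dv l) = Poly_Mapping.lookup a (Dv l) + Poly_Mapping.lookup b (Dv l)
        + (if l \<in> {1..k} then 1 else 0)"
      using ab(3) abk(3) dd lookup_dk[of k l] by simp
    show "Poly_Mapping.lookup m (Dv l) \<in> {-1, 0, 1}"
    proof (cases "l \<in> {1..k}")
      case True then show ?thesis using eqm ta(1) tb(1) by auto
    next
      case False then show ?thesis using eqm ta(2) tb(2) by simp
    qed
  qed
next
  assume H: "\<forall>i j k. 1 \<le> k \<and> k \<le> j \<and> j \<le> i \<and> i \<le> p \<longrightarrow>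
       (\<forall>m \<in> Poly_Mapping.keys (Lpoly E i k * Lpoly E j k * Dpoly k).
          \<forall>l. Poly_Mapping.lookup m (Dv l) \<in> {-1, 0, 1})"
  show "property_B p E"
    unfolding property_B_def
  proof (intro allI impI ballI)
    fix i j m l
    assume c: "1 \<le> j \<and> j < i \<and> i \<le> p \<and> (i, j) \<notin> E"
      and m: "m \<in> Poly_Mapping.keys (Lpoly E i j)"
    show "Poly_Mapping.lookup m (Dv l) \<in> {0, -1}"
    proof (rule ccontr)
      assume nm: "Poly_Mapping.lookup m (Dv l) \<notin> {0, -1}"
      have "m \<in> Sset j" using Lpoly_Sset m by blast
      then have s1: "Poly_Mapping.lookup m (Dv l) \<le> 0" "l \<notin> {1..j} \<longrightarrow> Poly_Mapping.lookup m (Dv l) = 0"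
        unfolding Sset_def by blast+
      have le: "Poly_Mapping.lookup m (Dv l) \<le> -2" using s1(1) nm by auto
      have le2: "l \<in> {1..j}" using s1(2) nm by auto
      obtain x where x: "x \<in> Poly_Mapping.keys (Lpoly E i j * Lpoly E i j)"
        "Poly_Mapping.lookup x (Dv l) \<le> 2 * Poly_Mapping.lookup m (Dv l)"
        using lowest[OF m] by blast
      have "x + dk j \<in> Poly_Mapping.keys (Lpoly E i j * Lpoly E i j * Dpoly j)"
        unfolding Dpoly_single by (rule keys_shift[OF x(1)])
      moreover have "1 \<le> j \<and> j \<le> i \<and> i \<le> i \<and> i \<le> p" using c by auto
      ultimately have "Poly_Mapping.lookup (x + dk j) (Dv l) \<in> {-1, 0, 1}"
        using H[rule_format] by blast
      moreover have "Poly_Mapping.lookup (x + dk j) (Dv l) = Poly_Mapping.lookup x (Dv l) + 1"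
        using le2 by (simp add: Poly_Mapping.lookup_add lookup_dk)
      ultimately show False using x(2) le by auto
    qed
  qed
qed

end
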